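(* Let $\mathcal{R}$ be a ring and let $(\mathcal{C}^{\bullet},\partial)$ be a bigraded cochain complex of $\mathcal{R}$-modules as described in the context. Then there are two commutative diagrams with exact rows and exact columns. The first has rows \[ 0\to B^{2}(\mathcal{C},\partial)\cap\mathcal{C}^{2,0}\hookrightarrow B^{2}(\mathcal{C},\partial)\xrightarrow{\pi_{1}}\mathcal{B}^{2}_{1}\to0, \] \[ 0\to Z^{2}(\mathcal{N}_{0},\overline{\partial})\hookrightarrow Z^{2}(\mathcal{C},\partial)\xrightarrow{\pi_{1}}\ker(\rho_{2})\to0, \] \[ 0\to\frac{Z^{2}(\mathcal{N}_{0},\overline{\partial})}{B^{2}(\mathcal{C},\partial)\cap\mathcal{C}^{2,0}}\to H^{2}(\mathcal{C},\partial)\to\frac{\ker(\rho_{2})}{\mathcal{B}^{2}_{1}}\to0, \] and the second has rows \[ 0\to\mathcal{B}^{2}_{1}\cap\mathcal{C}^{1,1}\hookrightarrow\mathcal{B}^{2}_{1}\xrightarrow{\pi_{2}}B^{2}(\mathcal{C}^{0,\bullet},\partial_{0,1})\to0, \] \[ 0\to\ker(\varrho_{2})\hookrightarrow\ker(\rho_{2})\xrightarrow{\pi_{2}}\mathcal{Z}^{2}_{2}\to0, \] \[ 0\to\frac{\ker(\varrho_{2})}{\mathcal{B}^{2}_{1}\cap\mathcal{C}^{1,1}}\to\frac{\ker(\rho_{2})}{\mathcal{B}^{2}_{1}}\to\frac{\mathcal{Z}^{2}_{2}}{B^{2}(\mathcal{C}^{0,\bullet},\partial_{0,1})}\to0. \]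 In each diagram the vertical maps from the first to the second row are inclusions, those from the second to the third row are the canonical quotient projections, and the maps of the third row are induced by those of the second row.
   Context: Setting: $\mathcal{C}^{\bullet}=\bigoplus_{k}\mathcal{C}^{k}$ is a graded $\mathcal{R}$-module with compatible bigrading $\mathcal{C}^{k}=\bigoplus_{p+q=k}\mathcal{C}^{p,q}$, $\mathcal{C}^{p,q}=\{0\}$ if $p<0$ or $q<0$; $\partial$ is $\mathcal{R}$-linear of degree $1$, $\partial^{2}=0$, and $\partial=\partial_{2,-1}+\partial_{1,0}+\partial_{0,1}$ with $\partial_{i,j}(\mathcal{C}^{p,q})\subseteq\mathcal{C}^{p+i,q+j}$. For $\eta\in\mathcal{C}^{k}$, $\eta_{p,q}$ is its $\mathcal{C}^{p,q}$-component. $G^{q}\mathcal{C}:=\bigoplus_{j\geq q}\mathcal{C}^{i,j}$ and $\pi_{q}:\mathcal{C}\to G^{q}\mathcal{C}$ is the projection along the bigrading. $Z,B,H$ denote cocycles, coboundaries, cohomology; $(\mathcal{C}^{0,\bullet},\partial_{0,1})$ is a cochain complex. Let $\mathcal{N}^{p,q}:=\ker(\partial_{0,1}|_{\mathcal{C}^{p,q}})\cap\ker(\partial_{2,-1}|_{\mathcal{C}^{p,q}})$ and, for $q\ge0$, $\mathcal{N}_{q}:=\bigoplus_{p}\mathcal{N}^{p-q,q}$ (the degree-$m$ part being $\mathcal{N}^{m-q,q}$); each $\mathcal{N}_{q}$ is a subcomplex of $(\mathcal{C},\partial)$, with differential $\overline{\partial}:=\partial|_{\mathcal{N}_q}=\partial_{1,0}|_{\mathcal{N}_q}$.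 Let $\mathcal{M}^{k}:=\{\eta\in\mathcal{C}^{k}\mid(\partial\eta)_{i,j}\in B^{k+1}(\mathcal{N}_{j},\overline{\partial})\ \text{for all } i+j=k+1\}$, $\mathcal{Z}^{k}_{q}:=\{\pi_{q}(\eta)\mid\eta\in\mathcal{M}^{k},\ \pi_{q}(\partial\eta)=0\}$ and $\mathcal{B}^{k}_{q}:=\pi_{q}(B^{k}(\mathcal{C},\partial))$. Let $\mathcal{A}^{k}:=\{\pi_{1}(\eta)\mid\eta\in\mathcal{C}^{k},\ \pi_{1}(\partial\eta)=0\}$ and $\mathcal{J}^{k}:=\mathcal{A}^{k}\cap\mathcal{C}^{k-1,1}$. For $\xi\in\mathcal{A}^{k}$ and any $\eta\in\mathcal{C}^{k}$ with $\pi_{1}\eta=\xi$, $\pi_{1}(\partial\eta)=0$, the element $\partial_{2,-1}\xi_{k-1,1}+\partial_{1,0}\eta_{k,0}$ is a $(k+1)$-cocycle of $(\mathcal{N}_{0},\overline{\partial})$ whose class depends only on $\xi$; this defines the linear map $\rho_{k}:\mathcal{A}^{k}\to H^{k+1}(\mathcal{N}_{0},\overline{\partial})$, $\rho_{k}(\xi):=[\partial_{2,-1}\xi_{k-1,1}+\partial_{1,0}\eta_{k,0}]$, and $\varrho_{k}:=\rho_{k}|_{\mathcal{J}^{k}}$. *)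

theory Defs
  imports "HOL-Algebra.Algebra"
begin

text \<open>The bigrading
  C = (+)_{p,q} C^{p,q} (p, q natural numbers, so C^{p,q} = 0 for negative indices
  automatically) is given by the family of component projections pr p q, and the
  differential is given by its three bihomogeneous parts.\<close>

record 'a bicx =
  pr  :: "nat \<Rightarrow> nat \<Rightarrow> 'a \<Rightarrow> 'a"
  d21 :: "'a \<Rightarrow> 'a"
  d10 :: "'a \<Rightarrow> 'a"
  d01 :: "'a \<Rightarrow> 'a"

definition lmodule :: "('r::ring_1 \<Rightarrow> 'a::ab_group_add \<Rightarrow> 'a) \<Rightarrow> bool" where
  "lmodule sc \<longleftrightarrow> (\<forall>r x y. sc r (x + y) = sc r x + sc r y) \<and>
     (\<forall>r s x. sc (r + s) x = sc r x + sc s x) \<and>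
     (\<forall>r s x. sc (r * s) x = sc r (sc s x)) \<and> (\<forall>x. sc 1 x = x)"

definition rlinear :: "('r::ring_1 \<Rightarrow> 'a::ab_group_add \<Rightarrow> 'a) \<Rightarrow> ('a \<Rightarrow> 'a) \<Rightarrow> bool" where
  "rlinear sc f \<longleftrightarrow> (\<forall>x y. f (x + y) = f x + f y) \<and> (\<forall>r x. f (sc r x) = sc r (f x))"

definition Cpq :: "'a bicx \<Rightarrow> nat \<Rightarrow> nat \<Rightarrow> 'a set" where
  "Cpq K p q = range (pr K p q)"

definition Ck :: "'a::zero bicx \<Rightarrow> nat \<Rightarrow> 'a set" where
  "Ck K k = {x. \<forall>p q. pr K p q x \<noteq> 0 \<longrightarrow> p + q = k}"

definition dif :: "'a::plus bicx \<Rightarrow> 'a \<Rightarrow> 'a" where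
  "dif K x = d21 K x + d10 K x + d01 K x"

definition bigraded_complex :: "('r::ring_1 \<Rightarrow> 'a::ab_group_add \<Rightarrow> 'a) \<Rightarrow> 'a bicx \<Rightarrow> bool" where
  "bigraded_complex sc K \<longleftrightarrow>
     lmodule sc \<and>
     (\<forall>p q. rlinear sc (pr K p q)) \<and>
     (\<forall>p q p' q' x. pr K p q (pr K p' q' x) = (if (p, q) = (p', q') then pr K p' q' x else 0)) \<and>
     (\<forall>x. finite {(p, q). pr K p q x \<noteq> 0}) \<and>
     (\<forall>x. x = (\<Sum>(p, q) \<in> {(p, q). pr K p q x \<noteq> 0}. pr K p q x)) \<and>
     rlinear sc (d21 K) \<and> rlinear sc (d10 K) \<and> rlinear sc (d01 K) \<and>
     (\<forall>p q. d21 K ` Cpq K p q \<subseteq> (if q = 0 then {0} else Cpq K (p + 2) (q - 1))) \<and>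
     (\<forall>p q. d10 K ` Cpq K p q \<subseteq> Cpq K (p + 1) q) \<and>
     (\<forall>p q. d01 K ` Cpq K p q \<subseteq> Cpq K p (q + 1)) \<and>
     (\<forall>x. dif K (dif K x) = 0)"

definition piq :: "'a::comm_monoid_add bicx \<Rightarrow> nat \<Rightarrow> 'a \<Rightarrow> 'a" where
  "piq K q x = (\<Sum>(i, j) \<in> {(i, j). pr K i j x \<noteq> 0 \<and> q \<le> j}. pr K i j x)"

definition Zc :: "'a::{zero,plus} bicx \<Rightarrow> nat \<Rightarrow> 'a set" where
  "Zc K k = {x \<in> Ck K k. dif K x = 0}"

definition Bc :: "'a::{zero,plus} bicx \<Rightarrow> nat \<Rightarrow> 'a set" where
  "Bc K k = (if k = 0 then {0} else dif K ` Ck K (k - 1))"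

definition Npq :: "'a::zero bicx \<Rightarrow> nat \<Rightarrow> nat \<Rightarrow> 'a set" where
  "Npq K p q = {x \<in> Cpq K p q. d01 K x = 0 \<and> d21 K x = 0}"

definition Ndeg :: "'a::zero bicx \<Rightarrow> nat \<Rightarrow> nat \<Rightarrow> 'a set" where
  "Ndeg K q m = (if q \<le> m then Npq K (m - q) q else {0})"

definition ZN :: "'a::{zero,plus} bicx \<Rightarrow> nat \<Rightarrow> nat \<Rightarrow> 'a set" where
  "ZN K q m = {x \<in> Ndeg K q m. dif K x = 0}"

definition BN :: "'a::{zero,plus} bicx \<Rightarrow> nat \<Rightarrow> nat \<Rightarrow> 'a set" where
  "BN K q m = (if m = 0 then {0} else dif K ` Ndeg K q (m - 1))"

definition Mk :: "'a::{zero,plus} bicx \<Rightarrow> nat \<Rightarrow> 'a set" where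
  "Mk K k = {\<eta> \<in> Ck K k. \<forall>i j. i + j = k + 1 \<longrightarrow> pr K i j (dif K \<eta>) \<in> BN K j (k + 1)}"

definition Zcal :: "'a::comm_monoid_add bicx \<Rightarrow> nat \<Rightarrow> nat \<Rightarrow> 'a set" where
  "Zcal K q k = {piq K q \<eta> | \<eta>. \<eta> \<in> Mk K k \<and> piq K q (dif K \<eta>) = 0}"

definition Bcal :: "'a::comm_monoid_add bicx \<Rightarrow> nat \<Rightarrow> nat \<Rightarrow> 'a set" where
  "Bcal K q k = piq K q ` Bc K k"

definition Acal :: "'a::comm_monoid_add bicx \<Rightarrow> nat \<Rightarrow> 'a set" where
  "Acal K k = {piq K 1 \<eta> | \<eta>. \<eta> \<in> Ck K k \<and> piq K 1 (dif K \<eta>) = 0}"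

definition Jcal :: "'a::comm_monoid_add bicx \<Rightarrow> nat \<Rightarrow> 'a set" where
  "Jcal K k = Acal K k \<inter> Cpq K (k - 1) 1"

text \<open>rho_k(xi) as the coset (class in H^{k+1}(N_0)) of
  d21 xi_{k-1,1} + d10 eta_{k,0}, for a chosen lift eta of xi.\<close>
definition rho :: "'a::comm_monoid_add bicx \<Rightarrow> nat \<Rightarrow> 'a \<Rightarrow> 'a set" where
  "rho K k \<xi> =
     (let \<eta> = (SOME \<eta>. \<eta> \<in> Ck K k \<and> piq K 1 \<eta> = \<xi> \<and> piq K 1 (dif K \<eta>) = 0)
      in (\<lambda>b. (d21 K (pr K (k - 1) 1 \<xi>) + d10 K (pr K k 0 \<eta>)) + b) ` BN K 0 (k + 1))"

definition ker_rho :: "'a::comm_monoid_add bicx \<Rightarrow> nat \<Rightarrow> 'a set" where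
  "ker_rho K k = {\<xi> \<in> Acal K k. rho K k \<xi> = BN K 0 (k + 1)}"

definition ker_varrho :: "'a::comm_monoid_add bicx \<Rightarrow> nat \<Rightarrow> 'a set" where
  "ker_varrho K k = ker_rho K k \<inter> Jcal K k"

definition agrp :: "'a::ab_group_add set \<Rightarrow> 'a monoid" where
  "agrp S = \<lparr>carrier = S, monoid.mult = (+), one = 0\<rparr>"

text \<open>Map between quotients induced by f: the coset S of H is sent to the union of the
  cosets H' + f x, x in S (which is the single coset H' + f x when f(H) is in H').\<close>
definition induced :: "'b monoid \<Rightarrow> 'b set \<Rightarrow> ('a \<Rightarrow> 'b) \<Rightarrow> 'a set \<Rightarrow> 'b set" where
  "induced G' H' f S = (\<Union>x\<in>S. H' #>\<^bsub>G'\<^esub> f x)"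

definition ses :: "'a monoid \<Rightarrow> 'b monoid \<Rightarrow> 'c monoid \<Rightarrow> ('a \<Rightarrow> 'b) \<Rightarrow> ('b \<Rightarrow> 'c) \<Rightarrow> bool" where
  "ses A B C f g \<longleftrightarrow> group A \<and> group B \<and> group C \<and> f \<in> hom A B \<and> g \<in> hom B C \<and>
     inj_on f (carrier A) \<and> f ` carrier A = kernel B C g \<and> g ` carrier B = carrier C"

end

theory Submission
  imports Defs
begin

definition sg :: "'a::ab_group_add set \<Rightarrow> bool" where
  "sg S \<longleftrightarrow> 0 \<in> S \<and> (\<forall>x\<in>S. \<forall>y\<in>S. x + y \<in> S) \<and> (\<forall>x\<in>S. - x \<in> S)"

lemma sgD: assumes "sg S" shows "0 \<in> S" "x \<in> S \<Longrightarrow> y \<in> S \<Longrightarrow> x + y \<in> S"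
  "x \<in> S \<Longrightarrow> - x \<in> S" "x \<in> S \<Longrightarrow> y \<in> S \<Longrightarrow> x - y \<in> S"
proof -
  show "0 \<in> S" using assms unfolding sg_def by blast
  show "x \<in> S \<Longrightarrow> y \<in> S \<Longrightarrow> x + y \<in> S" using assms unfolding sg_def by blast
  show "x \<in> S \<Longrightarrow> - x \<in> S" using assms unfolding sg_def by blast
  assume "x \<in> S" "y \<in> S"
  then have "x + - y \<in> S" using assms unfolding sg_def by blast
  then show "x - y \<in> S" by (simp only: diff_conv_add_uminus)
qed

lemma agrp_simps [simp]: "carrier (agrp S) = S" "x \<otimes>\<^bsub>agrp S\<^esub> y = x + y" "\<one>\<^bsub>agrp S\<^esub> = 0"
  by (simp_all add: agrp_def)

lemma rcos_agrp: "H #>\<^bsub>agrp S\<^esub> a = (\<lambda>h. h + a) ` H"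
  unfolding r_coset_def by auto

lemma comm_group_agrp: assumes "sg S" shows "comm_group (agrp S)"
proof (rule comm_groupI)
  fix x assume x: "x \<in> carrier (agrp S)"
  have "- x \<in> S" using x assms unfolding sg_def by simp
  then show "\<exists>y\<in>carrier (agrp S). y \<otimes>\<^bsub>agrp S\<^esub> x = \<one>\<^bsub>agrp S\<^esub>"
    by (intro bexI[of _ "- x"]) simp_all
next
  fix x y assume "x \<in> carrier (agrp S)" "y \<in> carrier (agrp S)"
  then show "x \<otimes>\<^bsub>agrp S\<^esub> y \<in> carrier (agrp S)" using assms unfolding sg_def by simp
next
  show "\<one>\<^bsub>agrp S\<^esub> \<in> carrier (agrp S)" using assms unfolding sg_def by simp
next
  fix x y z show "x \<otimes>\<^bsub>agrp S\<^esub> y \<otimes>\<^bsub>agrp S\<^esub> z = x \<otimes>\<^bsub>agrp S\<^esub> (y \<otimes>\<^bsub>agrp S\<^esub> z)"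
    by (simp add: add.assoc)
next
  fix x y show "x \<otimes>\<^bsub>agrp S\<^esub> y = y \<otimes>\<^bsub>agrp S\<^esub> x"
    by (simp add: add.commute)
next
  fix x show "\<one>\<^bsub>agrp S\<^esub> \<otimes>\<^bsub>agrp S\<^esub> x = x" by simp
qed

lemma group_agrp: "sg S \<Longrightarrow> group (agrp S)"
  using comm_group_agrp comm_group.axioms(2) by blast

lemma inv_agrp: assumes "sg S" "x \<in> S" shows "inv\<^bsub>agrp S\<^esub> x = - x"
proof -
  interpret group "agrp S" using group_agrp assms by blast
  have "- x \<in> S" using assms unfolding sg_def by blast
  then show ?thesis by (intro inv_equality) (simp_all add: assms)
qed

lemma subgroup_agrp: "sg A \<Longrightarrow> sg B \<Longrightarrow> A \<subseteq> B \<Longrightarrow> subgroup A (agrp B)"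
proof -
  assume a: "sg A" "sg B" "A \<subseteq> B"
  show ?thesis
  proof
    show "A \<subseteq> carrier (agrp B)" using a by simp
    fix x y assume x: "x \<in> A"
    show "inv\<^bsub>agrp B\<^esub> x \<in> A" using inv_agrp[OF a(2)] a x unfolding sg_def by auto
    assume y: "y \<in> A"
    show "x \<otimes>\<^bsub>agrp B\<^esub> y \<in> A" using a x y unfolding sg_def by simp
  next
    show "\<one>\<^bsub>agrp B\<^esub> \<in> A" using a unfolding sg_def by simp
  qed
qed

lemma quot_group: "sg A \<Longrightarrow> sg B \<Longrightarrow> A \<subseteq> B \<Longrightarrow> group (agrp B Mod A)"
proof -
  assume a: "sg A" "sg B" "A \<subseteq> B"
  interpret comm_group "agrp B" using comm_group_agrp a(2) .
  have "A \<lhd> agrp B" using subgroup_imp_normal subgroup_agrp[OF a] by blast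
  then show ?thesis by (rule normal.factorgroup_is_group)
qed

lemma carrier_quot: "carrier (agrp B Mod A) = {(\<lambda>h. h + a) ` A | a. a \<in> B}"
  by (simp add: FactGroup_def RCOSETS_def r_coset_def agrp_def) blast

lemma one_quot [simp]: "\<one>\<^bsub>agrp B Mod A\<^esub> = A"
  unfolding FactGroup_def by simp

lemma mult_quot: assumes "sg A"
  shows "(\<lambda>h. h + a) ` A \<otimes>\<^bsub>agrp B Mod A\<^esub> (\<lambda>h. h + b) ` A = (\<lambda>h. h + (a + b)) ` A"
proof -
  have "z \<in> set_mult (agrp B) ((\<lambda>h. h + a) ` A) ((\<lambda>h. h + b) ` A) \<longleftrightarrow> z \<in> (\<lambda>h. h + (a + b)) ` A" for z
  proof
    assume "z \<in> set_mult (agrp B) ((\<lambda>h. h + a) ` A) ((\<lambda>h. h + b) ` A)"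
    then obtain h k where hk: "h \<in> A" "k \<in> A" "z = (h + a) + (k + b)" unfolding set_mult_def by auto
    then have "z = (h + k) + (a + b)" by (simp add: algebra_simps)
    moreover have "h + k \<in> A" using hk sgD[OF assms] by blast
    ultimately show "z \<in> (\<lambda>h. h + (a + b)) ` A" by blast
  next
    assume "z \<in> (\<lambda>h. h + (a + b)) ` A"
    then obtain h where h: "h \<in> A" "z = h + (a + b)" by auto
    then have "z = (h + a) + (0 + b)" by (simp add: algebra_simps)
    moreover have "0 \<in> A" using sgD[OF assms] by blast
    ultimately show "z \<in> set_mult (agrp B) ((\<lambda>h. h + a) ` A) ((\<lambda>h. h + b) ` A)"
      unfolding set_mult_def using h(1) by force
  qed
  then have "set_mult (agrp B) ((\<lambda>h. h + a) ` A) ((\<lambda>h. h + b) ` A) = (\<lambda>h. h + (a + b)) ` A" by blast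
  then show ?thesis unfolding FactGroup_def by simp
qed

lemma coset_eq: assumes "sg A"
  shows "((\<lambda>h. h + a) ` A = (\<lambda>h. h + b) ` A) \<longleftrightarrow> a - b \<in> A"
proof
  assume e: "(\<lambda>h. h + a) ` A = (\<lambda>h. h + b) ` A"
  have "0 + a \<in> (\<lambda>h. h + a) ` A" using assms sgD by blast
  then obtain h where "h \<in> A" "a = h + b" using e by auto
  then show "a - b \<in> A" by simp
next
  assume d: "a - b \<in> A"
  show "(\<lambda>h. h + a) ` A = (\<lambda>h. h + b) ` A"
  proof (auto simp: image_iff)
    fix h assume "h \<in> A"
    then show "\<exists>x\<in>A. h + a = x + b"
      by (intro bexI[of _ "h + (a - b)"]) (auto simp: sgD assms d)
  next
    fix h assume "h \<in> A"
    then show "\<exists>x\<in>A. h + b = x + a"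
      by (intro bexI[of _ "h - (a - b)"]) (auto simp: sgD assms d)
  qed
qed

lemma coset_eq0: assumes "sg A" shows "((\<lambda>h. h + a) ` A = A) \<longleftrightarrow> a \<in> A"
  using coset_eq[OF assms, of a 0] by simp

lemma induced_coset:
  assumes "sg H'" "\<forall>x y. f (x + y) = f x + f y" "f ` H \<subseteq> H'" "0 \<in> H"
  shows "induced (agrp S) H' f ((\<lambda>h. h + a) ` H) = (\<lambda>k. k + f a) ` H'"
proof -
  have "\<And>h. h \<in> H \<Longrightarrow> (\<lambda>k. k + f (h + a)) ` H' = (\<lambda>k. k + f a) ` H'"
  proof -
    fix h assume h: "h \<in> H"
    have "f (h + a) - f a \<in> H'" using assms h by auto
    then show "(\<lambda>k. k + f (h + a)) ` H' = (\<lambda>k. k + f a) ` H'" by (simp only: coset_eq[OF assms(1)])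
  qed
  then show ?thesis unfolding induced_def rcos_agrp using assms(4) by auto
qed

lemma add_hom_facts:
  fixes p :: "'a::ab_group_add \<Rightarrow> 'b::ab_group_add"
  assumes "\<forall>x y. p (x + y) = p x + p y"
  shows "p 0 = 0" "p (- x) = - p x" "p (x - y) = p x - p y"
proof -
  have "p (0 + 0) = p 0 + p 0" using assms by blast
  then have h: "p 0 = p 0 + p 0" by (simp only: add_0_left)
  then show p0: "p 0 = 0" using add_cancel_right_right[of "p 0" "p 0"] by blast
  have pn: "p (- z) = - p z" for z
  proof -
    have "p (z + - z) = p z + p (- z)" using assms by blast
    then have "0 = p z + p (- z)" by (simp only: right_minus p0)
    then have "p z + p (- z) = 0" by (rule sym)
    then have "- p z = p (- z)" using neg_eq_iff_add_eq_0[of "p z" "p (- z)"] by blast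
    then show ?thesis by (rule sym)
  qed
  then show "p (- x) = - p x" .
  have "p (x + - y) = p x + p (- y)" using assms by blast
  then show "p (x - y) = p x - p y" using pn[of y] by (simp only: diff_conv_add_uminus)
qed

lemma setup_facts:
  fixes p :: "'a::ab_group_add \<Rightarrow> 'a"
  assumes sgB1: "sg B1" and sgB2: "sg B2" and sub: "B1 \<subseteq> B2"
    and padd: "\<forall>x y. p (x + y) = p x + p y"
    and A1: "A1 = {x\<in>B1. p x = 0}" and A2: "A2 = {x\<in>B2. p x = 0}"
    and C1: "C1 = p ` B1" and C2: "C2 = p ` B2"
  shows "sg A1" "sg A2" "sg C1" "sg C2" "A1 \<subseteq> A2" "C1 \<subseteq> C2" "A1 \<subseteq> B1" "A2 \<subseteq> B2"
proof -
  note pf = add_hom_facts[OF padd]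
  have kern: "sg {x\<in>B. p x = 0}" if "sg B" for B
  proof -
    have "0 \<in> {x\<in>B. p x = 0}" using sgD(1)[OF that] pf(1) by blast
    moreover have "\<forall>x\<in>{x\<in>B. p x = 0}. \<forall>y\<in>{x\<in>B. p x = 0}. x + y \<in> {x\<in>B. p x = 0}"
    proof (intro ballI)
      fix x y assume "x \<in> {x\<in>B. p x = 0}" "y \<in> {x\<in>B. p x = 0}"
      then have "x \<in> B" "y \<in> B" "p x = 0" "p y = 0" by blast+
      moreover have "p (x + y) = p x + p y" using padd by blast
      ultimately show "x + y \<in> {x\<in>B. p x = 0}" using sgD(2)[OF that] by simp
    qed
    moreover have "\<forall>x\<in>{x\<in>B. p x = 0}. - x \<in> {x\<in>B. p x = 0}"
    proof
      fix x assume "x \<in> {x\<in>B. p x = 0}"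
      then have "x \<in> B" "p x = 0" by blast+
      then show "- x \<in> {x\<in>B. p x = 0}" using sgD(3)[OF that] pf(2)[of x] by simp
    qed
    ultimately show ?thesis unfolding sg_def by blast
  qed
  have img: "sg (p ` B)" if "sg B" for B
  proof -
    have "0 \<in> p ` B" using sgD(1)[OF that] pf(1) by (metis image_eqI)
    moreover have "\<forall>x\<in>p ` B. \<forall>y\<in>p ` B. x + y \<in> p ` B"
    proof (intro ballI)
      fix x y assume "x \<in> p ` B" "y \<in> p ` B"
      then obtain u v where "u \<in> B" "v \<in> B" "x = p u" "y = p v" by blast
      then have "x + y = p (u + v)" "u + v \<in> B" using padd sgD(2)[OF that] by simp_all
      then show "x + y \<in> p ` B" by blast
    qed
    moreover have "\<forall>x\<in>p ` B. - x \<in> p ` B"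
    proof
      fix x assume "x \<in> p ` B"
      then obtain u where "u \<in> B" "x = p u" by blast
      then have "- x = p (- u)" "- u \<in> B" using pf(2)[of u] sgD(3)[OF that] by simp_all
      then show "- x \<in> p ` B" by blast
    qed
    ultimately show ?thesis unfolding sg_def by blast
  qed
  show "sg A1" using kern[OF sgB1] A1 by simp
  show "sg A2" using kern[OF sgB2] A2 by simp
  show "sg C1" using img[OF sgB1] C1 by simp
  show "sg C2" using img[OF sgB2] C2 by simp
  show "A1 \<subseteq> A2" using A1 A2 sub by blast
  show "C1 \<subseteq> C2" using C1 C2 sub by blast
  show "A1 \<subseteq> B1" using A1 by blast
  show "A2 \<subseteq> B2" using A2 by blast
qed

lemma ses_sub:
  fixes p :: "'a::ab_group_add \<Rightarrow> 'a"
  assumes sgB: "sg B" and padd: "\<forall>x y. p (x + y) = p x + p y"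
    and A: "A = {x\<in>B. p x = 0}" and C: "C = p ` B"
  shows "ses (agrp A) (agrp B) (agrp C) id p"
proof -
  have f: "sg A" "sg C" "A \<subseteq> B"
    using setup_facts[OF sgB sgB order_refl padd A A C C] by auto
  have "id \<in> hom (agrp A) (agrp B)" unfolding hom_def using f(3) by auto
  moreover have "p \<in> hom (agrp B) (agrp C)" unfolding hom_def using C padd by auto
  moreover have "id ` carrier (agrp A) = kernel (agrp B) (agrp C) p"
    unfolding kernel_def using A by auto
  moreover have "group (agrp A)" "group (agrp B)" "group (agrp C)" using group_agrp sgB f by auto
  moreover have "inj_on id (carrier (agrp A))" by simp
  moreover have "p ` carrier (agrp B) = carrier (agrp C)" using C by simp
  ultimately show ?thesis unfolding ses_def by blast
qed

lemma ses_quot: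
  assumes sgA: "sg A" and sgB: "sg B" and sub: "A \<subseteq> B"
  shows "ses (agrp A) (agrp B) (agrp B Mod A) id (\<lambda>x. A #>\<^bsub>agrp B\<^esub> x)"
proof -
  have "id \<in> hom (agrp A) (agrp B)" unfolding hom_def using sub by auto
  moreover have "(\<lambda>x. A #>\<^bsub>agrp B\<^esub> x) \<in> hom (agrp B) (agrp B Mod A)"
    unfolding hom_def rcos_agrp carrier_quot using mult_quot[OF sgA] by auto
  moreover have "id ` carrier (agrp A) = kernel (agrp B) (agrp B Mod A) (\<lambda>x. A #>\<^bsub>agrp B\<^esub> x)"
    unfolding kernel_def rcos_agrp using coset_eq0[OF sgA] sub by auto
  moreover have "(\<lambda>x. A #>\<^bsub>agrp B\<^esub> x) ` carrier (agrp B) = carrier (agrp B Mod A)"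
    unfolding rcos_agrp carrier_quot by auto
  moreover have "group (agrp A)" "group (agrp B)" "group (agrp B Mod A)" using group_agrp quot_group sgA sgB sub by auto
  moreover have "inj_on id (carrier (agrp A))" by simp
  ultimately show ?thesis unfolding ses_def by blast
qed

lemma quot_elem:
  "U \<in> carrier (agrp B Mod A) \<Longrightarrow> (\<And>a. a \<in> B \<Longrightarrow> U = (\<lambda>h. h + a) ` A \<Longrightarrow> P) \<Longrightarrow> P"
  unfolding carrier_quot by blast

lemma quot_memI: "a \<in> B \<Longrightarrow> (\<lambda>h. h + a) ` A \<in> carrier (agrp B Mod A)"
  unfolding carrier_quot by blast

lemma ses_row3:
  fixes p :: "'a::ab_group_add \<Rightarrow> 'a"
  assumes sgB1: "sg B1" and sgB2: "sg B2" and sub: "B1 \<subseteq> B2"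
    and padd: "\<forall>x y. p (x + y) = p x + p y"
    and A1: "A1 = {x\<in>B1. p x = 0}" and A2: "A2 = {x\<in>B2. p x = 0}"
    and C1: "C1 = p ` B1" and C2: "C2 = p ` B2"
  shows "ses (agrp A2 Mod A1) (agrp B2 Mod B1) (agrp C2 Mod C1)
           (induced (agrp B2) B1 id) (induced (agrp C2) C1 p)"
proof -
  note F = setup_facts[OF sgB1 sgB2 sub padd A1 A2 C1 C2]
  note pf = add_hom_facts[OF padd]
  define f where "f = induced (agrp B2) B1 id"
  define g where "g = induced (agrp C2) C1 p"
  have idadd: "\<forall>x y. id (x + y) = id x + id (y::'a)" by simp
  have fc: "f ((\<lambda>h. h + a) ` A1) = (\<lambda>h. h + a) ` B1" for a
  proof -
    have "id ` A1 \<subseteq> B1" using F(7) by simp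
    then have "induced (agrp B2) B1 id ((\<lambda>h. h + a) ` A1) = (\<lambda>k. k + id a) ` B1"
      by (rule induced_coset[OF sgB1 idadd _ sgD(1)[OF F(1)]])
    then show ?thesis unfolding f_def by (simp only: id_apply)
  qed
  have gc: "g ((\<lambda>h. h + b) ` B1) = (\<lambda>h. h + p b) ` C1" for b
  proof -
    have "p ` B1 \<subseteq> C1" using C1 by simp
    then show ?thesis unfolding g_def by (rule induced_coset[OF F(3) padd _ sgD(1)[OF sgB1]])
  qed
  have G: "group (agrp A2 Mod A1)" "group (agrp B2 Mod B1)" "group (agrp C2 Mod C1)"
    using quot_group F sgB1 sgB2 sub by auto
  have hf: "f \<in> hom (agrp A2 Mod A1) (agrp B2 Mod B1)"
    unfolding hom_def
  proof (intro CollectI conjI funcsetI ballI)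
    fix U assume "U \<in> carrier (agrp A2 Mod A1)"
    then obtain a where a: "a \<in> A2" "U = (\<lambda>h. h + a) ` A1" by (rule quot_elem)
    have "a \<in> B2" using a F(8) by blast
    then show "f U \<in> carrier (agrp B2 Mod B1)" using a fc quot_memI by metis
  next
    fix U V assume "U \<in> carrier (agrp A2 Mod A1)" "V \<in> carrier (agrp A2 Mod A1)"
    then obtain a b where a: "a \<in> A2" "U = (\<lambda>h. h + a) ` A1" and b: "b \<in> A2" "V = (\<lambda>h. h + b) ` A1"
      by (metis quot_elem)
    show "f (U \<otimes>\<^bsub>agrp A2 Mod A1\<^esub> V) = f U \<otimes>\<^bsub>agrp B2 Mod B1\<^esub> f V"
      unfolding a b mult_quot[OF F(1)] fc mult_quot[OF sgB1] ..
  qed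
  have hg: "g \<in> hom (agrp B2 Mod B1) (agrp C2 Mod C1)"
    unfolding hom_def
  proof (intro CollectI conjI funcsetI ballI)
    fix U assume "U \<in> carrier (agrp B2 Mod B1)"
    then obtain a where a: "a \<in> B2" "U = (\<lambda>h. h + a) ` B1" by (rule quot_elem)
    have "p a \<in> C2" using a C2 by blast
    then show "g U \<in> carrier (agrp C2 Mod C1)" using a gc quot_memI by metis
  next
    fix U V assume "U \<in> carrier (agrp B2 Mod B1)" "V \<in> carrier (agrp B2 Mod B1)"
    then obtain a b where a: "a \<in> B2" "U = (\<lambda>h. h + a) ` B1" and b: "b \<in> B2" "V = (\<lambda>h. h + b) ` B1"
      by (metis quot_elem)
    have "p (a + b) = p a + p b" using padd by blast
    then show "g (U \<otimes>\<^bsub>agrp B2 Mod B1\<^esub> V) = g U \<otimes>\<^bsub>agrp C2 Mod C1\<^esub> g V"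
      unfolding a b mult_quot[OF sgB1] gc mult_quot[OF F(3)] by simp
  qed
  have inj: "inj_on f (carrier (agrp A2 Mod A1))"
  proof (rule inj_onI)
    fix U V assume "U \<in> carrier (agrp A2 Mod A1)" "V \<in> carrier (agrp A2 Mod A1)" and e: "f U = f V"
    then obtain a b where a: "a \<in> A2" "U = (\<lambda>h. h + a) ` A1" and b: "b \<in> A2" "V = (\<lambda>h. h + b) ` A1"
      by (metis quot_elem)
    have "a - b \<in> B1" using e unfolding a b fc coset_eq[OF sgB1] .
    moreover have "a - b \<in> A2" using a b sgD(4)[OF F(2)] by blast
    ultimately have "a - b \<in> A1" using A1 A2 by blast
    then show "U = V" unfolding a b coset_eq[OF F(1)] .
  qed
  have ker: "f ` carrier (agrp A2 Mod A1) = kernel (agrp B2 Mod B1) (agrp C2 Mod C1) g"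
  proof (intro equalityI subsetI)
    fix V assume "V \<in> f ` carrier (agrp A2 Mod A1)"
    then obtain U where U: "U \<in> carrier (agrp A2 Mod A1)" "V = f U" by blast
    then obtain a where a: "a \<in> A2" "U = (\<lambda>h. h + a) ` A1" by (metis quot_elem)
    have aB: "a \<in> B2" "p a = 0" using a A2 by blast+
    have "V = (\<lambda>h. h + a) ` B1" using U a fc by simp
    moreover have "V \<in> carrier (agrp B2 Mod B1)" using calculation aB quot_memI by metis
    moreover have "g V = C1" unfolding calculation(1) gc aB(2) using coset_eq0[OF F(3)] sgD(1)[OF F(3)] by blast
    ultimately show "V \<in> kernel (agrp B2 Mod B1) (agrp C2 Mod C1) g" unfolding kernel_def by simp
  next
    fix V assume "V \<in> kernel (agrp B2 Mod B1) (agrp C2 Mod C1) g"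
    then have V: "V \<in> carrier (agrp B2 Mod B1)" "g V = C1" unfolding kernel_def by simp_all
    then obtain b where b: "b \<in> B2" "V = (\<lambda>h. h + b) ` B1" by (metis quot_elem)
    have "(\<lambda>h. h + p b) ` C1 = C1" using V(2) b(2) gc by simp
    then have "p b \<in> C1" using coset_eq0[OF F(3)] by blast
    then obtain b1 where b1: "b1 \<in> B1" "p b = p b1" using C1 by blast
    define a where "a = b - b1"
    have "a \<in> B2" using b(1) b1(1) sub sgD(4)[OF sgB2] unfolding a_def by blast
    moreover have "p a = 0" unfolding a_def pf(3) b1(2) by simp
    ultimately have aA: "a \<in> A2" using A2 by blast
    have "b - a \<in> B1" unfolding a_def using b1(1) by simp
    then have "V = (\<lambda>h. h + a) ` B1" unfolding b(2) coset_eq[OF sgB1] .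
    then have "V = f ((\<lambda>h. h + a) ` A1)" using fc by simp
    moreover have "(\<lambda>h. h + a) ` A1 \<in> carrier (agrp A2 Mod A1)" using aA quot_memI by metis
    ultimately show "V \<in> f ` carrier (agrp A2 Mod A1)" by blast
  qed
  have surj: "g ` carrier (agrp B2 Mod B1) = carrier (agrp C2 Mod C1)"
  proof (intro equalityI subsetI)
    fix W assume "W \<in> g ` carrier (agrp B2 Mod B1)"
    then show "W \<in> carrier (agrp C2 Mod C1)" using hg unfolding hom_def by blast
  next
    fix W assume "W \<in> carrier (agrp C2 Mod C1)"
    then obtain c where c: "c \<in> C2" "W = (\<lambda>h. h + c) ` C1" by (metis quot_elem)
    then obtain b where b: "b \<in> B2" "c = p b" using C2 by blast
    have "W = g ((\<lambda>h. h + b) ` B1)" using c b gc by simp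
    moreover have "(\<lambda>h. h + b) ` B1 \<in> carrier (agrp B2 Mod B1)" using b quot_memI by metis
    ultimately show "W \<in> g ` carrier (agrp B2 Mod B1)" by blast
  qed
  show ?thesis unfolding ses_def f_def[symmetric] g_def[symmetric] using G hf hg inj ker surj by blast
qed

lemma diagram:
  fixes p :: "'a::ab_group_add \<Rightarrow> 'a"
  assumes sgB1: "sg B1" and sgB2: "sg B2" and sub: "B1 \<subseteq> B2"
    and padd: "\<forall>x y. p (x + y) = p x + p y"
    and A1: "A1 = {x\<in>B1. p x = 0}" and A2: "A2 = {x\<in>B2. p x = 0}"
    and C1: "C1 = p ` B1" and C2: "C2 = p ` B2"
  shows "ses (agrp A1) (agrp B1) (agrp C1) id p \<and>
     ses (agrp A2) (agrp B2) (agrp C2) id p \<and>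
     ses (agrp A2 Mod A1) (agrp B2 Mod B1) (agrp C2 Mod C1)
         (induced (agrp B2) B1 id) (induced (agrp C2) C1 p) \<and>
     ses (agrp A1) (agrp A2) (agrp A2 Mod A1) id (\<lambda>x. A1 #>\<^bsub>agrp A2\<^esub> x) \<and>
     ses (agrp B1) (agrp B2) (agrp B2 Mod B1) id (\<lambda>x. B1 #>\<^bsub>agrp B2\<^esub> x) \<and>
     ses (agrp C1) (agrp C2) (agrp C2 Mod C1) id (\<lambda>x. C1 #>\<^bsub>agrp C2\<^esub> x) \<and>
     (\<forall>x\<in>B1. id (p x) = p (id x)) \<and>
     (\<forall>x\<in>A2. induced (agrp B2) B1 id (A1 #>\<^bsub>agrp A2\<^esub> x) = B1 #>\<^bsub>agrp B2\<^esub> id x) \<and>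
     (\<forall>x\<in>B2. induced (agrp C2) C1 p (B1 #>\<^bsub>agrp B2\<^esub> x) = C1 #>\<^bsub>agrp C2\<^esub> p x)"
proof -
  note F = setup_facts[OF sgB1 sgB2 sub padd A1 A2 C1 C2]
  have idadd: "\<forall>x y. id (x + y) = id x + id (y::'a)" by simp
  have r1: "ses (agrp A1) (agrp B1) (agrp C1) id p" by (rule ses_sub[OF sgB1 padd A1 C1])
  have r2: "ses (agrp A2) (agrp B2) (agrp C2) id p" by (rule ses_sub[OF sgB2 padd A2 C2])
  have r3: "ses (agrp A2 Mod A1) (agrp B2 Mod B1) (agrp C2 Mod C1)
         (induced (agrp B2) B1 id) (induced (agrp C2) C1 p)" by (rule ses_row3[OF sgB1 sgB2 sub padd A1 A2 C1 C2])
  have c1: "ses (agrp A1) (agrp A2) (agrp A2 Mod A1) id (\<lambda>x. A1 #>\<^bsub>agrp A2\<^esub> x)"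
    by (rule ses_quot[OF F(1) F(2) F(5)])
  have c2: "ses (agrp B1) (agrp B2) (agrp B2 Mod B1) id (\<lambda>x. B1 #>\<^bsub>agrp B2\<^esub> x)"
    by (rule ses_quot[OF sgB1 sgB2 sub])
  have c3: "ses (agrp C1) (agrp C2) (agrp C2 Mod C1) id (\<lambda>x. C1 #>\<^bsub>agrp C2\<^esub> x)"
    by (rule ses_quot[OF F(3) F(4) F(6)])
  have m1: "\<forall>x\<in>B1. id (p x) = p (id x)" by simp
  have m2: "\<forall>x\<in>A2. induced (agrp B2) B1 id (A1 #>\<^bsub>agrp A2\<^esub> x) = B1 #>\<^bsub>agrp B2\<^esub> id x"
  proof
    fix x assume "x \<in> A2"
    have "id ` A1 \<subseteq> B1" using F(7) by simp
    then have "induced (agrp B2) B1 id ((\<lambda>h. h + x) ` A1) = (\<lambda>k. k + id x) ` B1"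
      by (rule induced_coset[OF sgB1 idadd _ sgD(1)[OF F(1)]])
    then show "induced (agrp B2) B1 id (A1 #>\<^bsub>agrp A2\<^esub> x) = B1 #>\<^bsub>agrp B2\<^esub> id x"
      unfolding rcos_agrp .
  qed
  have m3: "\<forall>x\<in>B2. induced (agrp C2) C1 p (B1 #>\<^bsub>agrp B2\<^esub> x) = C1 #>\<^bsub>agrp C2\<^esub> p x"
  proof
    fix x assume "x \<in> B2"
    have "p ` B1 \<subseteq> C1" using C1 by simp
    then have "induced (agrp C2) C1 p ((\<lambda>h. h + x) ` B1) = (\<lambda>k. k + p x) ` C1"
      by (rule induced_coset[OF F(3) padd _ sgD(1)[OF sgB1]])
    then show "induced (agrp C2) C1 p (B1 #>\<^bsub>agrp B2\<^esub> x) = C1 #>\<^bsub>agrp C2\<^esub> p x"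
      unfolding rcos_agrp .
  qed
  show ?thesis using r1 r2 r3 c1 c2 c3 m1 m2 m3 by blast
qed

lemma add_sum:
  fixes g :: "'a::ab_group_add \<Rightarrow> 'b::ab_group_add"
  assumes ga: "\<forall>x y. g (x + y) = g x + g y"
  shows "g (sum f S) = (\<Sum>i\<in>S. g (f i))"
proof -
  have g0: "g 0 = 0"
  proof -
    have "g (0 + 0) = g 0 + g 0" using ga by blast
    then have "g 0 + 0 = g 0 + g 0" by simp
    then show ?thesis by (metis add_left_cancel)
  qed
  show ?thesis
  proof (induction S rule: infinite_finite_induct)
    case (infinite A) then show ?case using g0 by simp
  next
    case empty then show ?case using g0 by simp
  next
    case (insert x F)
    then show ?case using ga by simp
  qed
qed

lemma sg_image:
  fixes p :: "'a::ab_group_add \<Rightarrow> 'b::ab_group_add"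
  assumes "sg B" "\<forall>x y. p (x + y) = p x + p y"
  shows "sg (p ` B)"
proof -
  have p0: "p 0 = 0"
  proof -
    have "p (0 + 0) = p 0 + p 0" using assms(2) by blast
    then have "p 0 + 0 = p 0 + p 0" by simp
    then show ?thesis by (metis add_left_cancel)
  qed
  have pn: "p (- z) = - p z" for z
  proof -
    have "p (z + - z) = p z + p (- z)" using assms(2) by blast
    then have "0 = p z + p (- z)" by (simp only: right_minus p0)
    then have "p z + p (- z) = 0" by (rule sym)
    then have "- p z = p (- z)" using neg_eq_iff_add_eq_0[of "p z" "p (- z)"] by blast
    then show ?thesis by (rule sym)
  qed
  have "0 \<in> p ` B" using sgD(1)[OF assms(1)] p0 by (metis image_eqI)
  moreover have "\<forall>x\<in>p ` B. \<forall>y\<in>p ` B. x + y \<in> p ` B"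
  proof (intro ballI)
    fix x y assume "x \<in> p ` B" "y \<in> p ` B"
    then obtain u v where "u \<in> B" "v \<in> B" "x = p u" "y = p v" by blast
    then have "x + y = p (u + v)" "u + v \<in> B" using assms(2) sgD(2)[OF assms(1)] by simp_all
    then show "x + y \<in> p ` B" by blast
  qed
  moreover have "\<forall>x\<in>p ` B. - x \<in> p ` B"
  proof
    fix x assume "x \<in> p ` B"
    then obtain u where "u \<in> B" "x = p u" by blast
    then have "- x = p (- u)" "- u \<in> B" using pn[of u] sgD(3)[OF assms(1)] by simp_all
    then show "- x \<in> p ` B" by blast
  qed
  ultimately show ?thesis unfolding sg_def by blast
qed

lemma sg_kernel:
  fixes g :: "'a::ab_group_add \<Rightarrow> 'b::ab_group_add"
  assumes sgB: "sg B" and ga: "\<forall>x y. g (x + y) = g x + g y"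
  shows "sg {x\<in>B. g x = 0}"
proof -
  note pf = add_hom_facts[OF ga]
  have "0 \<in> {x\<in>B. g x = 0}" using sgD(1)[OF sgB] pf(1) by blast
  moreover have "\<forall>x\<in>{x\<in>B. g x = 0}. \<forall>y\<in>{x\<in>B. g x = 0}. x + y \<in> {x\<in>B. g x = 0}"
  proof (intro ballI)
    fix x y assume "x \<in> {x\<in>B. g x = 0}" "y \<in> {x\<in>B. g x = 0}"
    then have "x \<in> B" "y \<in> B" "g x = 0" "g y = 0" by blast+
    moreover have "g (x + y) = g x + g y" using ga by blast
    ultimately show "x + y \<in> {x\<in>B. g x = 0}" using sgD(2)[OF sgB] by simp
  qed
  moreover have "\<forall>x\<in>{x\<in>B. g x = 0}. - x \<in> {x\<in>B. g x = 0}"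
  proof
    fix x assume "x \<in> {x\<in>B. g x = 0}"
    then have "x \<in> B" "g x = 0" by blast+
    then show "- x \<in> {x\<in>B. g x = 0}" using sgD(3)[OF sgB] pf(2)[of x] by simp
  qed
  ultimately show ?thesis unfolding sg_def by blast
qed

lemma coset_eq0':
  assumes "sg A" shows "((\<lambda>b. e + b) ` A = A) \<longleftrightarrow> e \<in> A"
proof -
  have "(\<lambda>b. e + b) = (\<lambda>b. b + e)" by (rule ext) (simp add: add.commute)
  then show ?thesis using coset_eq0[OF assms, of e] by simp
qed

locale bgc =
  fixes sc :: "'r::ring_1 \<Rightarrow> 'a::ab_group_add \<Rightarrow> 'a" and K :: "'a bicx"
  assumes bc: "bigraded_complex sc K"
begin

abbreviation P where "P \<equiv> pr K"

lemma bcp: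
  "\<forall>p q. rlinear sc (P p q)"
  "\<forall>p q p' q' x. P p q (P p' q' x) = (if (p, q) = (p', q') then P p' q' x else 0)"
  "\<forall>x. finite {(p, q). P p q x \<noteq> 0}"
  "\<forall>x. x = (\<Sum>(p, q) \<in> {(p, q). P p q x \<noteq> 0}. P p q x)"
  "rlinear sc (d21 K)" "rlinear sc (d10 K)" "rlinear sc (d01 K)"
  "\<forall>p q. d21 K ` Cpq K p q \<subseteq> (if q = 0 then {0} else Cpq K (p + 2) (q - 1))"
  "\<forall>p q. d10 K ` Cpq K p q \<subseteq> Cpq K (p + 1) q"
  "\<forall>p q. d01 K ` Cpq K p q \<subseteq> Cpq K p (q + 1)"
  "\<forall>x. dif K (dif K x) = 0"
  using bc unfolding bigraded_complex_def apply -
  apply (elim conjE; assumption)+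
  done

lemma pr_add: "P p q (x + y) = P p q x + P p q y"
  using bcp(1) unfolding rlinear_def by blast
lemma d21_add: "d21 K (x + y) = d21 K x + d21 K y"
  using bcp(5) unfolding rlinear_def by blast
lemma d10_add: "d10 K (x + y) = d10 K x + d10 K y"
  using bcp(6) unfolding rlinear_def by blast
lemma d01_add: "d01 K (x + y) = d01 K x + d01 K y"
  using bcp(7) unfolding rlinear_def by blast
lemma pr_pr: "P p q (P p' q' x) = (if (p, q) = (p', q') then P p' q' x else 0)"
  using bcp(2) by blast
lemma fin: "finite {(p, q). P p q x \<noteq> 0}"
  using bcp(3) by blast
lemma decomp: "x = (\<Sum>(p, q) \<in> {(p, q). P p q x \<noteq> 0}. P p q x)"
  using bcp(4) by blast
lemma d21_deg: "x \<in> Cpq K p q \<Longrightarrow> d21 K x \<in> (if q = 0 then {0} else Cpq K (p + 2) (q - 1))"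
  using bcp(8) by blast
lemma d10_deg: "x \<in> Cpq K p q \<Longrightarrow> d10 K x \<in> Cpq K (p + 1) q"
  using bcp(9) by blast
lemma d01_deg: "x \<in> Cpq K p q \<Longrightarrow> d01 K x \<in> Cpq K p (q + 1)"
  using bcp(10) by blast
lemma dd: "dif K (dif K x) = 0"
  using bcp(11) by blast

lemma pr_addh: "\<forall>x y. P p q (x + y) = P p q x + P p q y" using pr_add by blast
lemma d21_addh: "\<forall>x y. d21 K (x + y) = d21 K x + d21 K y" using d21_add by blast
lemma d10_addh: "\<forall>x y. d10 K (x + y) = d10 K x + d10 K y" using d10_add by blast
lemma d01_addh: "\<forall>x y. d01 K (x + y) = d01 K x + d01 K y" using d01_add by blast
lemma dif_addh: "\<forall>x y. dif K (x + y) = dif K x + dif K y"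
  unfolding dif_def using d21_add d10_add d01_add by (simp add: algebra_simps)

lemmas pr_h = add_hom_facts[OF pr_addh]
lemmas d21_h = add_hom_facts[OF d21_addh]
lemmas d10_h = add_hom_facts[OF d10_addh]
lemmas d01_h = add_hom_facts[OF d01_addh]
lemmas dif_h = add_hom_facts[OF dif_addh]

lemma ext_pr: assumes "\<And>p q. P p q x = P p q y" shows "x = y"
proof -
  have "{(p, q). P p q x \<noteq> 0} = {(p, q). P p q y \<noteq> 0}" using assms by simp
  then have "(\<Sum>(p, q) \<in> {(p, q). P p q x \<noteq> 0}. P p q x) = (\<Sum>(p, q) \<in> {(p, q). P p q y \<noteq> 0}. P p q y)"
    using assms by simp
  then show ?thesis using decomp[of x] decomp[of y] by simp
qed

lemma Cpq_iff: "x \<in> Cpq K p q \<longleftrightarrow> P p q x = x"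
proof
  assume "x \<in> Cpq K p q"
  then obtain z where "x = P p q z" unfolding Cpq_def by blast
  then show "P p q x = x" using pr_pr[of p q p q z] by simp
next
  assume "P p q x = x" then show "x \<in> Cpq K p q" unfolding Cpq_def by (metis rangeI)
qed

lemma Cpq_other: "x \<in> Cpq K p q \<Longrightarrow> (a, b) \<noteq> (p, q) \<Longrightarrow> P a b x = 0"
  using Cpq_iff pr_pr by metis

lemma pr_in: "P p q x \<in> Cpq K p q" unfolding Cpq_def by blast

lemma zero_Cpq: "0 \<in> Cpq K p q" using Cpq_iff pr_h(1) by blast

lemma Cpq_add: "x \<in> Cpq K p q \<Longrightarrow> y \<in> Cpq K p q \<Longrightarrow> x + y \<in> Cpq K p q"
  using Cpq_iff pr_add by metis

lemma Ck_zero: "x \<in> Ck K k \<Longrightarrow> a + b \<noteq> k \<Longrightarrow> P a b x = 0"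
  unfolding Ck_def by blast

lemma Ck_I: "(\<And>a b. a + b \<noteq> k \<Longrightarrow> P a b x = 0) \<Longrightarrow> x \<in> Ck K k"
  unfolding Ck_def by blast

lemma Cpq_Ck: "x \<in> Cpq K p q \<Longrightarrow> x \<in> Ck K (p + q)"
  by (rule Ck_I) (metis Cpq_other prod.inject)

lemma sg_Ck: "sg (Ck K k)"
  unfolding sg_def
proof (intro conjI ballI)
  show "0 \<in> Ck K k" by (rule Ck_I) (simp add: pr_h(1))
next
  fix x y assume "x \<in> Ck K k" "y \<in> Ck K k"
  then show "x + y \<in> Ck K k" by (intro Ck_I) (simp add: pr_add Ck_zero)
next
  fix x assume "x \<in> Ck K k"
  then show "- x \<in> Ck K k" by (intro Ck_I) (simp add: pr_h(2) Ck_zero)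
qed

lemma comp_lemma:
  fixes g :: "'a \<Rightarrow> 'a"
  assumes ga: "\<forall>x y. g (x + y) = g x + g y"
    and oth: "\<And>a b. (a, b) \<noteq> (a0, b0) \<Longrightarrow> P p q (g (P a b x)) = 0"
  shows "P p q (g x) = P p q (g (P a0 b0 x))"
proof -
  define S where "S = {(p, q). P p q x \<noteq> 0}"
  have fS: "finite S" unfolding S_def by (rule fin)
  have g0: "g 0 = 0" using add_hom_facts[OF ga] by blast
  define h where "h = (\<lambda>(a, b). P p q (g (P a b x)))"
  have "g x = g (\<Sum>(a, b) \<in> S. P a b x)" using decomp[of x] unfolding S_def by simp
  also have "\<dots> = (\<Sum>i\<in>S. g (case i of (a, b) \<Rightarrow> P a b x))" by (rule add_sum[OF ga])
  finally have "P p q (g x) = P p q (\<Sum>i\<in>S. g (case i of (a, b) \<Rightarrow> P a b x))" by simp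
  also have "\<dots> = (\<Sum>i\<in>S. P p q (g (case i of (a, b) \<Rightarrow> P a b x)))" by (rule add_sum[OF pr_addh])
  also have "\<dots> = sum h S" unfolding h_def by (intro sum.cong) auto
  finally have e: "P p q (g x) = sum h S" .
  have z: "\<forall>i\<in>S - {(a0, b0)}. h i = 0" unfolding h_def using oth by auto
  show ?thesis
  proof (cases "(a0, b0) \<in> S")
    case True
    have "sum h S = h (a0, b0) + sum h (S - {(a0, b0)})" by (rule sum.remove[OF fS True])
    also have "sum h (S - {(a0, b0)}) = 0" using z by (intro sum.neutral) blast
    finally show ?thesis using e unfolding h_def by simp
  next
    case False
    then have "P a0 b0 x = 0" unfolding S_def by simp
    then have r: "P p q (g (P a0 b0 x)) = 0" using g0 pr_h(1) by simp
    have "sum h S = 0" using z False by (intro sum.neutral) blast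
    then show ?thesis using e r by simp
  qed
qed

lemma pr_d21: "P p q (d21 K x) = (if 2 \<le> p then d21 K (P (p - 2) (q + 1) x) else 0)"
proof -
  have oth: "P p q (d21 K (P a b x)) = 0" if "(a, b) \<noteq> (p - 2, q + 1) \<or> p < 2" for a b
  proof (cases "b = 0")
    case True
    then have "d21 K (P a b x) = 0" using d21_deg[OF pr_in[of a b x]] by simp
    then show ?thesis using pr_h(1) by simp
  next
    case False
    then have "d21 K (P a b x) \<in> Cpq K (a + 2) (b - 1)" using d21_deg[OF pr_in[of a b x]] by simp
    moreover have "(p, q) \<noteq> (a + 2, b - 1)" using that False by auto
    ultimately show ?thesis using Cpq_other by blast
  qed
  show ?thesis
  proof (cases "2 \<le> p")
    case True
    have "P p q (d21 K x) = P p q (d21 K (P (p - 2) (q + 1) x))"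
      by (rule comp_lemma[OF d21_addh]) (use oth in blast)
    moreover have "d21 K (P (p - 2) (q + 1) x) \<in> Cpq K p q"
    proof -
      obtain m where m: "p = m + 2" using True by (metis le_add_diff_inverse2)
      have "d21 K (P m (q + 1) x) \<in> Cpq K (m + 2) q" using d21_deg[OF pr_in[of m "q + 1" x]] by simp
      then show ?thesis using m by simp
    qed
    ultimately show ?thesis using True Cpq_iff by simp
  next
    case False
    have "P p q (d21 K x) = P p q (d21 K (P 0 0 x))"
      by (rule comp_lemma[OF d21_addh]) (use oth False in simp)
    then show ?thesis using oth False by simp
  qed
qed

lemma pr_d10: "P p q (d10 K x) = (if 1 \<le> p then d10 K (P (p - 1) q x) else 0)"
proof -
  have oth: "P p q (d10 K (P a b x)) = 0" if "(a, b) \<noteq> (p - 1, q) \<or> p < 1" for a b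
  proof -
    have "d10 K (P a b x) \<in> Cpq K (a + 1) b" using d10_deg[OF pr_in[of a b x]] by simp
    moreover have "(p, q) \<noteq> (a + 1, b)" using that by auto
    ultimately show ?thesis using Cpq_other by blast
  qed
  show ?thesis
  proof (cases "1 \<le> p")
    case True
    have "P p q (d10 K x) = P p q (d10 K (P (p - 1) q x))"
      by (rule comp_lemma[OF d10_addh]) (use oth in blast)
    moreover have "d10 K (P (p - 1) q x) \<in> Cpq K p q"
    proof -
      obtain m where m: "p = m + 1" using True by (metis le_add_diff_inverse2)
      have "d10 K (P m q x) \<in> Cpq K (m + 1) q" using d10_deg[OF pr_in[of m q x]] by simp
      then show ?thesis using m by simp
    qed
    ultimately show ?thesis using True Cpq_iff by simp
  next
    case False
    have "P p q (d10 K x) = P p q (d10 K (P 0 0 x))"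
      by (rule comp_lemma[OF d10_addh]) (use oth False in simp)
    then show ?thesis using oth False by simp
  qed
qed

lemma pr_d01: "P p q (d01 K x) = (if 1 \<le> q then d01 K (P p (q - 1) x) else 0)"
proof -
  have oth: "P p q (d01 K (P a b x)) = 0" if "(a, b) \<noteq> (p, q - 1) \<or> q < 1" for a b
  proof -
    have "d01 K (P a b x) \<in> Cpq K a (b + 1)" using d01_deg[OF pr_in[of a b x]] by simp
    moreover have "(p, q) \<noteq> (a, b + 1)" using that by auto
    ultimately show ?thesis using Cpq_other by blast
  qed
  show ?thesis
  proof (cases "1 \<le> q")
    case True
    have "P p q (d01 K x) = P p q (d01 K (P p (q - 1) x))"
      by (rule comp_lemma[OF d01_addh]) (use oth in blast)
    moreover have "d01 K (P p (q - 1) x) \<in> Cpq K p q"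
    proof -
      obtain m where m: "q = m + 1" using True by (metis le_add_diff_inverse2)
      have "d01 K (P p m x) \<in> Cpq K p (m + 1)" using d01_deg[OF pr_in[of p m x]] by simp
      then show ?thesis using m by simp
    qed
    ultimately show ?thesis using True Cpq_iff by simp
  next
    case False
    have "P p q (d01 K x) = P p q (d01 K (P 0 0 x))"
      by (rule comp_lemma[OF d01_addh]) (use oth False in simp)
    then show ?thesis using oth False by simp
  qed
qed

lemma pr_dif: "P p q (dif K x) = (if 2 \<le> p then d21 K (P (p - 2) (q + 1) x) else 0)
   + (if 1 \<le> p then d10 K (P (p - 1) q x) else 0) + (if 1 \<le> q then d01 K (P p (q - 1) x) else 0)"
  unfolding dif_def pr_add pr_d21 pr_d10 pr_d01 ..

lemma pr_piq: "P i j (piq K r x) = (if r \<le> j then P i j x else 0)"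
proof -
  define T where "T = {(a, b). P a b x \<noteq> 0 \<and> r \<le> b}"
  have fT: "finite T" using fin[of x] unfolding T_def by (rule rev_finite_subset) auto
  have "P i j (piq K r x) = (\<Sum>k\<in>T. P i j (case k of (a, b) \<Rightarrow> P a b x))"
    unfolding piq_def T_def[symmetric] by (rule add_sum[OF pr_addh])
  also have "\<dots> = (\<Sum>k\<in>T. if k = (i, j) then P i j x else 0)"
  proof (intro sum.cong refl)
    fix k assume "k \<in> T"
    obtain a b where k: "k = (a, b)" by (cases k)
    show "P i j (case k of (a, b) \<Rightarrow> P a b x) = (if k = (i, j) then P i j x else 0)"
      unfolding k by (cases "a = i \<and> b = j") (auto simp: pr_pr)
  qed
  also have "\<dots> = (if (i, j) \<in> T then P i j x else 0)" using fT by simp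
  also have "\<dots> = (if r \<le> j then P i j x else 0)" unfolding T_def by auto
  finally show ?thesis .
qed

lemma piq_addh: "\<forall>x y. piq K r (x + y) = piq K r x + piq K r y"
  by (intro allI, rule ext_pr) (simp add: pr_piq pr_add)

lemmas piq_h = add_hom_facts[OF piq_addh]

lemma piq_piq: "r \<le> s \<Longrightarrow> piq K s (piq K r x) = piq K s x"
  by (rule ext_pr) (simp add: pr_piq)

lemma piq_Cpq: "x \<in> Cpq K p q \<Longrightarrow> q < r \<Longrightarrow> piq K r x = 0"
proof (rule ext_pr)
  fix i j assume a: "x \<in> Cpq K p q" "q < r"
  show "P i j (piq K r x) = P i j 0"
  proof (cases "r \<le> j")
    case True
    then have "(i, j) \<noteq> (p, q)" using a(2) by auto
    then show ?thesis using True Cpq_other[OF a(1)] pr_h(1) by (simp add: pr_piq)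
  next
    case False then show ?thesis by (simp add: pr_piq pr_h(1))
  qed
qed

lemma pure0: assumes "x \<in> Ck K k" shows "piq K 1 x = 0 \<longleftrightarrow> x \<in> Cpq K k 0"
proof
  assume h: "piq K 1 x = 0"
  have "P k 0 x = x"
  proof (rule ext_pr)
    fix i j show "P i j (P k 0 x) = P i j x"
    proof (cases "j = 0")
      case True
      show ?thesis
      proof (cases "i = k")
        case True
        with \<open>j = 0\<close> show ?thesis by (simp add: pr_pr)
      next
        case False
        then show ?thesis using \<open>j = 0\<close> Ck_zero[OF assms, of i j] by (simp add: pr_pr)
      qed
    next
      case False
      have "P i j (piq K 1 x) = P i j x" using False by (simp add: pr_piq)
      then have "P i j x = 0" using h pr_h(1) by simp
      then show ?thesis using False by (simp add: pr_pr)
    qed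
  qed
  then show "x \<in> Cpq K k 0" using Cpq_iff by blast
next
  assume "x \<in> Cpq K k 0" then show "piq K 1 x = 0" using piq_Cpq by simp
qed

lemma dif_Ck: assumes "x \<in> Ck K k" shows "dif K x \<in> Ck K (k + 1)"
proof (rule Ck_I)
  fix a b assume ab: "a + b \<noteq> k + 1"
  have 1: "(if 2 \<le> a then d21 K (P (a - 2) (b + 1) x) else 0) = 0"
  proof (cases "2 \<le> a")
    case True
    then have "a - 2 + (b + 1) \<noteq> k" using ab by arith
    then show ?thesis using True Ck_zero[OF assms] d21_h(1) by simp
  qed simp
  have 2: "(if 1 \<le> a then d10 K (P (a - 1) b x) else 0) = 0"
  proof (cases "1 \<le> a")
    case True
    then have "a - 1 + b \<noteq> k" using ab by arith
    then show ?thesis using True Ck_zero[OF assms] d10_h(1) by simp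
  qed simp
  have 3: "(if 1 \<le> b then d01 K (P a (b - 1) x) else 0) = 0"
  proof (cases "1 \<le> b")
    case True
    then have "a + (b - 1) \<noteq> k" using ab by arith
    then show ?thesis using True Ck_zero[OF assms] d01_h(1) by simp
  qed simp
  show "P a b (dif K x) = 0" unfolding pr_dif 1 2 3 by simp
qed

lemma Bc2: "Bc K 2 = dif K ` Ck K 1" by (simp add: Bc_def)

lemma sg_Bc2: "sg (Bc K 2)" unfolding Bc2 by (rule sg_image[OF sg_Ck dif_addh])

lemma sg_Zc2: "sg (Zc K 2)" unfolding Zc_def by (rule sg_kernel[OF sg_Ck dif_addh])

lemma Bc_Zc: "Bc K 2 \<subseteq> Zc K 2"
proof
  fix x assume "x \<in> Bc K 2"
  then obtain y where y: "y \<in> Ck K 1" "x = dif K y" unfolding Bc2 by blast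
  have "x \<in> Ck K 2" using dif_Ck[OF y(1)] y(2) by (simp add: numeral_2_eq_2)
  moreover have "dif K x = 0" using y(2) dd by simp
  ultimately show "x \<in> Zc K 2" unfolding Zc_def by blast
qed

lemma X11_eq: "Bc K 2 \<inter> Cpq K 2 0 = {x \<in> Bc K 2. piq K 1 x = 0}"
proof -
  have "x \<in> Ck K 2" if "x \<in> Bc K 2" for x using Bc_Zc that unfolding Zc_def by blast
  then show ?thesis using pure0[of _ 2] by blast
qed

lemma ZN_eq: "ZN K 0 2 = {x \<in> Zc K 2. piq K 1 x = 0}"
proof -
  have Z: "ZN K 0 2 = {x \<in> Npq K 2 0. dif K x = 0}" by (simp add: ZN_def Ndeg_def)
  show ?thesis
  proof (intro equalityI subsetI)
    fix x assume "x \<in> ZN K 0 2"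
    then have x: "x \<in> Cpq K 2 0" "dif K x = 0" unfolding Z Npq_def by blast+
    have "x \<in> Ck K 2" using Cpq_Ck[OF x(1)] by simp
    moreover have "piq K 1 x = 0" using piq_Cpq[OF x(1)] by simp
    ultimately show "x \<in> {x \<in> Zc K 2. piq K 1 x = 0}" unfolding Zc_def using x(2) by blast
  next
    fix x assume "x \<in> {x \<in> Zc K 2. piq K 1 x = 0}"
    then have x: "x \<in> Ck K 2" "dif K x = 0" "piq K 1 x = 0" unfolding Zc_def by blast+
    have c: "x \<in> Cpq K 2 0" using pure0[OF x(1)] x(3) by blast
    have "d21 K x \<in> {0}" using d21_deg[OF c] by simp
    then have z21: "d21 K x = 0" by simp
    have "P 2 1 (dif K x) = d21 K (P 0 2 x) + d10 K (P 1 1 x) + d01 K (P 2 0 x)"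
      by (simp add: pr_dif numeral_2_eq_2)
    moreover have "P 0 2 x = 0" "P 1 1 x = 0" using Cpq_other[OF c] by auto
    moreover have "P 2 0 x = x" using c Cpq_iff by blast
    ultimately have "P 2 1 (dif K x) = d01 K x" using d21_h(1) d10_h(1) by simp
    then have z01: "d01 K x = 0" using x(2) pr_h(1) by simp
    show "x \<in> ZN K 0 2" unfolding Z Npq_def using c z21 z01 x(2) by blast
  qed
qed

lemma sg_N20: "sg (Npq K 2 0)"
proof -
  have "0 \<in> Npq K 2 0" unfolding Npq_def using zero_Cpq d01_h(1) d21_h(1) by blast
  moreover have "\<forall>x\<in>Npq K 2 0. \<forall>y\<in>Npq K 2 0. x + y \<in> Npq K 2 0"
  proof (intro ballI)
    fix x y assume "x \<in> Npq K 2 0" "y \<in> Npq K 2 0"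
    then have x: "x \<in> Cpq K 2 0" "d01 K x = 0" "d21 K x = 0" and y: "y \<in> Cpq K 2 0" "d01 K y = 0" "d21 K y = 0"
      unfolding Npq_def by blast+
    have "x + y \<in> Cpq K 2 0" by (rule Cpq_add[OF x(1) y(1)])
    moreover have "d01 K (x + y) = 0" using x y by (simp only: d01_add add_0_left)
    moreover have "d21 K (x + y) = 0" using x y by (simp only: d21_add add_0_left)
    ultimately show "x + y \<in> Npq K 2 0" unfolding Npq_def by blast
  qed
  moreover have "\<forall>x\<in>Npq K 2 0. - x \<in> Npq K 2 0"
  proof
    fix x assume "x \<in> Npq K 2 0"
    then have x: "x \<in> Cpq K 2 0" "d01 K x = 0" "d21 K x = 0" unfolding Npq_def by blast+
    have "P 2 0 (- x) = - P 2 0 x" by (rule pr_h(2))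
    also have "P 2 0 x = x" using x(1) Cpq_iff by blast
    finally have "- x \<in> Cpq K 2 0" using Cpq_iff by blast
    moreover have "d01 K (- x) = 0" using x(2) d01_h(2)[of x] by simp
    moreover have "d21 K (- x) = 0" using x(3) d21_h(2)[of x] by simp
    ultimately show "- x \<in> Npq K 2 0" unfolding Npq_def by blast
  qed
  ultimately show ?thesis unfolding sg_def by blast
qed

lemma BN3: "BN K 0 3 = dif K ` Npq K 2 0" by (simp add: BN_def Ndeg_def)

lemma sg_BN3: "sg (BN K 0 3)" unfolding BN3 by (rule sg_image[OF sg_N20 dif_addh])

lemma pr30: "P 3 0 (dif K x) = d21 K (P 1 1 x) + d10 K (P 2 0 x)"
  by (simp add: pr_dif numeral_3_eq_3 numeral_2_eq_2)

lemma pr21: "P 2 1 (dif K x) = d21 K (P 0 2 x) + d10 K (P 1 1 x) + d01 K (P 2 0 x)"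
  by (simp add: pr_dif numeral_2_eq_2)

lemma lift_d01:
  assumes "piq K 1 \<eta> = piq K 1 \<eta>'" "piq K 1 (dif K \<eta>) = 0" "piq K 1 (dif K \<eta>') = 0"
  shows "d01 K (P 2 0 \<eta>) = d01 K (P 2 0 \<eta>')"
proof -
  have z: "P 2 1 (dif K x) = 0" if "piq K 1 (dif K x) = 0" for x
  proof -
    have "P 2 1 (piq K 1 (dif K x)) = P 2 1 (dif K x)" by (simp add: pr_piq)
    then show ?thesis using that pr_h(1) by simp
  qed
  have e02: "P 0 2 \<eta> = P 0 2 \<eta>'"
    using arg_cong[OF assms(1), of "P 0 2"] by (simp add: pr_piq)
  have e11: "P 1 1 \<eta> = P 1 1 \<eta>'"
    using arg_cong[OF assms(1), of "P 1 1"] by (simp add: pr_piq)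
  have "d21 K (P 0 2 \<eta>) + d10 K (P 1 1 \<eta>) + d01 K (P 2 0 \<eta>) = 0"
    using z[OF assms(2)] pr21 by simp
  moreover have "d21 K (P 0 2 \<eta>) + d10 K (P 1 1 \<eta>) + d01 K (P 2 0 \<eta>') = 0"
    using z[OF assms(3)] pr21 e02 e11 by simp
  ultimately show ?thesis by (metis add_left_cancel)
qed

definition Qlift where "Qlift \<xi> \<eta> \<longleftrightarrow> \<eta> \<in> Ck K 2 \<and> piq K 1 \<eta> = \<xi> \<and> piq K 1 (dif K \<eta>) = 0"

lemma rho2: "rho K 2 \<xi> = (\<lambda>b. (d21 K (P 1 1 \<xi>) + d10 K (P 2 0 (SOME \<eta>. Qlift \<xi> \<eta>))) + b) ` BN K 0 3"
  unfolding rho_def Qlift_def Let_def by simp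

lemma Acal2: "\<xi> \<in> Acal K 2 \<longleftrightarrow> (\<exists>\<eta>. Qlift \<xi> \<eta>)"
  unfolding Acal_def Qlift_def by blast

lemma rho_eq: "ker_rho K 2 = piq K 1 ` Zc K 2"
proof (intro equalityI subsetI)
  fix \<xi> assume "\<xi> \<in> piq K 1 ` Zc K 2"
  then obtain \<eta> where \<eta>: "\<eta> \<in> Ck K 2" "dif K \<eta> = 0" "\<xi> = piq K 1 \<eta>" unfolding Zc_def by blast
  have Q: "Qlift \<xi> \<eta>" unfolding Qlift_def using \<eta> piq_h(1) by simp
  then have A: "\<xi> \<in> Acal K 2" using Acal2 by blast
  define \<eta>' where "\<eta>' = (SOME \<eta>. Qlift \<xi> \<eta>)"
  have Q': "Qlift \<xi> \<eta>'" unfolding \<eta>'_def using Q by (rule someI)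
  then have \<eta>': "\<eta>' \<in> Ck K 2" "piq K 1 \<eta>' = \<xi>" "piq K 1 (dif K \<eta>') = 0" unfolding Qlift_def by blast+
  define e where "e = d21 K (P 1 1 \<xi>) + d10 K (P 2 0 \<eta>')"
  have e11: "P 1 1 \<xi> = P 1 1 \<eta>" unfolding \<eta>(3) by (simp add: pr_piq)
  have "d21 K (P 1 1 \<eta>) + d10 K (P 2 0 \<eta>) = 0" using pr30[of \<eta>] \<eta>(2) pr_h(1) by simp
  then have d21e: "d21 K (P 1 1 \<xi>) = - d10 K (P 2 0 \<eta>)" using e11 by (simp add: eq_neg_iff_add_eq_0)
  define w where "w = P 2 0 (\<eta>' - \<eta>)"
  have wC: "w \<in> Cpq K 2 0" unfolding w_def by (rule pr_in)
  have w: "w = P 2 0 \<eta>' - P 2 0 \<eta>" unfolding w_def by (rule pr_h(3))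
  have ew: "e = d10 K w" unfolding e_def w d10_h(3) d21e by simp
  have "d21 K w \<in> {0}" using d21_deg[OF wC] by simp
  then have w21: "d21 K w = 0" by simp
  have "d01 K (P 2 0 \<eta>) = d01 K (P 2 0 \<eta>')"
    by (rule lift_d01) (use \<eta> \<eta>' piq_h(1) in simp_all)
  then have w01: "d01 K w = 0" unfolding w d01_h(3) by simp
  have "dif K w = d10 K w" unfolding dif_def w21 w01 by simp
  then have "e = dif K w" using ew by simp
  moreover have "w \<in> Npq K 2 0" unfolding Npq_def using wC w21 w01 by blast
  ultimately have "e \<in> BN K 0 3" unfolding BN3 by blast
  then have "rho K 2 \<xi> = BN K 0 3" unfolding rho2 \<eta>'_def[symmetric] e_def[symmetric]
    using coset_eq0'[OF sg_BN3] by blast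
  then show "\<xi> \<in> ker_rho K 2" unfolding ker_rho_def using A by simp
next
  fix \<xi> assume "\<xi> \<in> ker_rho K 2"
  then have A: "\<xi> \<in> Acal K 2" and R: "rho K 2 \<xi> = BN K 0 3" unfolding ker_rho_def by simp_all
  obtain \<eta>0 where "Qlift \<xi> \<eta>0" using A Acal2 by blast
  define \<eta>' where "\<eta>' = (SOME \<eta>. Qlift \<xi> \<eta>)"
  have Q': "Qlift \<xi> \<eta>'" unfolding \<eta>'_def using \<open>Qlift \<xi> \<eta>0\<close> by (rule someI)
  then have \<eta>': "\<eta>' \<in> Ck K 2" "piq K 1 \<eta>' = \<xi>" "piq K 1 (dif K \<eta>') = 0" unfolding Qlift_def by blast+
  define e where "e = d21 K (P 1 1 \<xi>) + d10 K (P 2 0 \<eta>')"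
  have "e \<in> BN K 0 3" using R unfolding rho2 \<eta>'_def[symmetric] e_def[symmetric]
    using coset_eq0'[OF sg_BN3] by blast
  then obtain w where w: "w \<in> Npq K 2 0" "e = dif K w" unfolding BN3 by blast
  have wC: "w \<in> Cpq K 2 0" and w01: "d01 K w = 0" and w21: "d21 K w = 0" using w(1) unfolding Npq_def by blast+
  have dw: "dif K w = d10 K w" unfolding dif_def w21 w01 by simp
  have ceC: "e \<in> Cpq K 3 0" using w(2) dw d10_deg[OF wC] by (simp add: numeral_3_eq_3 numeral_2_eq_2)
  have dC: "dif K \<eta>' \<in> Ck K 3" using dif_Ck[OF \<eta>'(1)] by (simp add: numeral_3_eq_3 numeral_2_eq_2)
  have dC': "dif K \<eta>' \<in> Cpq K 3 0" using pure0[OF dC] \<eta>'(3) by blast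
  have e11: "P 1 1 \<xi> = P 1 1 \<eta>'" unfolding \<eta>'(2)[symmetric] by (simp add: pr_piq)
  have "P 3 0 (dif K \<eta>') = e" unfolding pr30 e_def e11 ..
  then have de: "dif K \<eta>' = e" using dC' ceC Cpq_iff by metis
  define \<eta>'' where "\<eta>'' = \<eta>' - w"
  have wCk: "w \<in> Ck K 2" using Cpq_Ck[OF wC] by simp
  have "\<eta>'' \<in> Ck K 2" unfolding \<eta>''_def using sgD(4)[OF sg_Ck \<eta>'(1) wCk] .
  moreover have "dif K \<eta>'' = 0" unfolding \<eta>''_def dif_h(3) de w(2) by simp
  moreover have "piq K 1 \<eta>'' = \<xi>" unfolding \<eta>''_def piq_h(3) \<eta>'(2) using piq_Cpq[OF wC] by simp
  ultimately show "\<xi> \<in> piq K 1 ` Zc K 2" unfolding Zc_def by blast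
qed

lemma G2: assumes "\<eta> \<in> Ck K 2"
  shows "piq K 2 (piq K 1 \<eta>) = 0 \<longleftrightarrow> piq K 1 \<eta> \<in> Cpq K 1 1"
proof
  assume h: "piq K 2 (piq K 1 \<eta>) = 0"
  then have h2: "piq K 2 \<eta> = 0" using piq_piq[of 1 2 \<eta>] by simp
  have "P 1 1 (piq K 1 \<eta>) = piq K 1 \<eta>"
  proof (rule ext_pr)
    fix i j show "P i j (P 1 1 (piq K 1 \<eta>)) = P i j (piq K 1 \<eta>)"
    proof (cases "(i, j) = (1, 1)")
      case True then show ?thesis by (simp add: pr_pr)
    next
      case False
      have "P i j (piq K 1 \<eta>) = 0"
      proof (cases "j = 0")
        case True then show ?thesis by (simp add: pr_piq)
      next
        case j0: False
        show ?thesis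
        proof (cases "2 \<le> j")
          case True
          have "P i j (piq K 2 \<eta>) = P i j \<eta>" using True by (simp add: pr_piq)
          then have "P i j \<eta> = 0" using h2 pr_h(1) by simp
          then show ?thesis by (simp add: pr_piq)
        next
          case False
          then have "j = 1" "i \<noteq> 1" using j0 \<open>(i, j) \<noteq> (1, 1)\<close> by auto
          then have "i + j \<noteq> 2" by simp
          then have "P i j \<eta> = 0" using Ck_zero[OF assms] by blast
          then show ?thesis by (simp add: pr_piq)
        qed
      qed
      moreover have "P i j (P 1 1 (piq K 1 \<eta>)) = 0" by (simp only: pr_pr if_not_P[OF False])
      ultimately show ?thesis by simp
    qed
  qed
  then show "piq K 1 \<eta> \<in> Cpq K 1 1" using Cpq_iff by blast
next
  assume "piq K 1 \<eta> \<in> Cpq K 1 1"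
  then show "piq K 2 (piq K 1 \<eta>) = 0" using piq_Cpq by simp
qed

lemma Bcal12: "Bcal K 1 2 = piq K 1 ` Bc K 2" by (simp add: Bcal_def)

lemma Bc_Ck: "Bc K 2 \<subseteq> Ck K 2" using Bc_Zc unfolding Zc_def by blast

lemma Y11_eq: "Bcal K 1 2 \<inter> Cpq K 1 1 = {x \<in> Bcal K 1 2. piq K 2 x = 0}"
proof -
  have "x \<in> Cpq K 1 1 \<longleftrightarrow> piq K 2 x = 0" if "x \<in> Bcal K 1 2" for x
  proof -
    have "x \<in> piq K 1 ` Bc K 2" using that Bcal12 by simp
    then obtain \<eta> where "\<eta> \<in> Ck K 2" "x = piq K 1 \<eta>" using Bc_Ck by blast
    then show ?thesis using G2 by blast
  qed
  then show ?thesis by blast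
qed

lemma Y21_eq: "ker_varrho K 2 = {x \<in> ker_rho K 2. piq K 2 x = 0}"
proof -
  have "x \<in> Cpq K 1 1 \<longleftrightarrow> piq K 2 x = 0" if "x \<in> ker_rho K 2" for x
  proof -
    have "x \<in> piq K 1 ` Zc K 2" using that rho_eq by simp
    then obtain \<eta> where "\<eta> \<in> Ck K 2" "x = piq K 1 \<eta>" unfolding Zc_def by blast
    then show ?thesis using G2 by blast
  qed
  moreover have "ker_rho K 2 \<subseteq> Acal K 2" unfolding ker_rho_def by blast
  ultimately show ?thesis unfolding ker_varrho_def Jcal_def by auto
qed

lemma piq2_dif1: assumes "y \<in> Ck K 1" shows "piq K 2 (dif K y) = d01 K (P 0 1 y)"
proof (rule ext_pr)
  fix i j
  show "P i j (piq K 2 (dif K y)) = P i j (d01 K (P 0 1 y))"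
  proof (cases "2 \<le> j")
    case False
    have "P i j (d01 K (P 0 1 y)) = 0"
    proof (cases "j = 0")
      case True then show ?thesis by (simp add: pr_d01)
    next
      case False
      then have "j = 1" using \<open>\<not> 2 \<le> j\<close> by simp
      then show ?thesis by (simp add: pr_d01 pr_pr d01_h(1))
    qed
    then show ?thesis using False by (simp add: pr_piq)
  next
    case True
    have t1: "(if 2 \<le> i then d21 K (P (i - 2) (j + 1) y) else 0) = 0"
    proof (cases "2 \<le> i")
      case True
      then have "i - 2 + (j + 1) \<noteq> 1" using \<open>2 \<le> j\<close> by arith
      then show ?thesis using True Ck_zero[OF assms] d21_h(1) by simp
    qed simp
    have t2: "(if 1 \<le> i then d10 K (P (i - 1) j y) else 0) = 0"
    proof (cases "1 \<le> i")
      case True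
      then have "i - 1 + j \<noteq> 1" using \<open>2 \<le> j\<close> by arith
      then show ?thesis using True Ck_zero[OF assms] d10_h(1) by simp
    qed simp
    have "P i j (piq K 2 (dif K y)) = P i j (dif K y)" using True by (simp add: pr_piq)
    also have "\<dots> = d01 K (P i (j - 1) y)" unfolding pr_dif t1 t2 using True by simp
    also have "\<dots> = P i j (d01 K (P 0 1 y))"
    proof (cases "(i, j - 1) = (0, 1)")
      case True
      then show ?thesis using \<open>2 \<le> j\<close> by (simp add: pr_d01 pr_pr)
    next
      case False
      then have "i + (j - 1) \<noteq> 1" using \<open>2 \<le> j\<close> by auto
      then have "P i (j - 1) y = 0" using Ck_zero[OF assms] by blast
      moreover have "P i (j - 1) (P 0 1 y) = 0" by (simp only: pr_pr if_not_P[OF False])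
      ultimately show ?thesis using \<open>2 \<le> j\<close> by (simp add: pr_d01)
    qed
    finally show ?thesis .
  qed
qed

lemma Y13_eq: "d01 K ` Cpq K 0 1 = piq K 2 ` Bcal K 1 2"
proof (intro equalityI subsetI)
  fix z assume "z \<in> d01 K ` Cpq K 0 1"
  then obtain w where w: "w \<in> Cpq K 0 1" "z = d01 K w" by blast
  have wC: "w \<in> Ck K 1" using Cpq_Ck[OF w(1)] by simp
  have "z = d01 K (P 0 1 w)" using w Cpq_iff by simp
  also have "\<dots> = piq K 2 (dif K w)" using piq2_dif1[OF wC] by simp
  also have "\<dots> = piq K 2 (piq K 1 (dif K w))" using piq_piq[of 1 2] by simp
  finally show "z \<in> piq K 2 ` Bcal K 1 2" unfolding Bcal12 Bc2 using wC by blast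
next
  fix z assume "z \<in> piq K 2 ` Bcal K 1 2"
  then obtain y where y: "y \<in> Ck K 1" "z = piq K 2 (piq K 1 (dif K y))" unfolding Bcal12 Bc2 by blast
  have "z = piq K 2 (dif K y)" using y(2) piq_piq[of 1 2] by simp
  also have "\<dots> = d01 K (P 0 1 y)" by (rule piq2_dif1[OF y(1)])
  finally show "z \<in> d01 K ` Cpq K 0 1" using pr_in by blast
qed

lemma zero_Ndeg: "0 \<in> Ndeg K j m"
  unfolding Ndeg_def Npq_def using zero_Cpq d01_h(1) d21_h(1) by simp

lemma Zcal_eq: "Zcal K 2 2 = piq K 2 ` ker_rho K 2"
proof -
  have pp: "piq K 2 ` ker_rho K 2 = piq K 2 ` Zc K 2"
    unfolding rho_eq image_image using piq_piq[of 1 2] by simp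
  have "Zcal K 2 2 = piq K 2 ` Zc K 2"
  proof (intro equalityI subsetI)
    fix z assume "z \<in> piq K 2 ` Zc K 2"
    then obtain \<eta> where \<eta>: "\<eta> \<in> Ck K 2" "dif K \<eta> = 0" "z = piq K 2 \<eta>" unfolding Zc_def by blast
    have "\<forall>i j. i + j = 2 + 1 \<longrightarrow> P i j (dif K \<eta>) \<in> BN K j (2 + 1)"
    proof (intro allI impI)
      fix i j :: nat
      have "dif K 0 \<in> dif K ` Ndeg K j 2" using zero_Ndeg by blast
      then have "0 \<in> BN K j 3" unfolding BN_def using dif_h(1) by simp
      then show "P i j (dif K \<eta>) \<in> BN K j (2 + 1)" using \<eta>(2) pr_h(1) by simp
    qed
    then have "\<eta> \<in> Mk K 2" unfolding Mk_def using \<eta>(1) by blast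
    moreover have "piq K 2 (dif K \<eta>) = 0" using \<eta>(2) piq_h(1) by simp
    ultimately show "z \<in> Zcal K 2 2" unfolding Zcal_def using \<eta>(3) by blast
  next
    fix z assume "z \<in> Zcal K 2 2"
    then obtain \<eta> where \<eta>: "\<eta> \<in> Mk K 2" "piq K 2 (dif K \<eta>) = 0" "z = piq K 2 \<eta>"
      unfolding Zcal_def by blast
    have \<eta>C: "\<eta> \<in> Ck K 2" using \<eta>(1) unfolding Mk_def by blast
    have M: "\<forall>i j. i + j = 2 + 1 \<longrightarrow> P i j (dif K \<eta>) \<in> BN K j (2 + 1)" using \<eta>(1) unfolding Mk_def by blast
    have "P 3 0 (dif K \<eta>) \<in> BN K 0 3" using M[rule_format, of 3 0] by simp
    then obtain a where a: "a \<in> Npq K 2 0" "P 3 0 (dif K \<eta>) = dif K a" unfolding BN3 by blast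
    have BN13: "BN K 1 3 = dif K ` Npq K 1 1" by (simp add: BN_def Ndeg_def)
    have "P 2 1 (dif K \<eta>) \<in> BN K 1 3" using M[rule_format, of 2 1] by simp
    then obtain b where b: "b \<in> Npq K 1 1" "P 2 1 (dif K \<eta>) = dif K b" unfolding BN13 by blast
    have aC: "a \<in> Cpq K 2 0" "d01 K a = 0" "d21 K a = 0" using a(1) unfolding Npq_def by blast+
    have bC: "b \<in> Cpq K 1 1" "d01 K b = 0" "d21 K b = 0" using b(1) unfolding Npq_def by blast+
    have da: "dif K a \<in> Cpq K 3 0"
      using d10_deg[OF aC(1)] aC(2,3) unfolding dif_def by (simp add: numeral_3_eq_3 numeral_2_eq_2)
    have db: "dif K b \<in> Cpq K 2 1"
      using d10_deg[OF bC(1)] bC(2,3) unfolding dif_def by (simp add: numeral_2_eq_2)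
    define \<eta>' where "\<eta>' = \<eta> - a - b"
    have aCk: "a \<in> Ck K 2" using Cpq_Ck[OF aC(1)] by simp
    have bCk: "b \<in> Ck K 2" using Cpq_Ck[OF bC(1)] by (simp add: numeral_2_eq_2)
    have "\<eta>' \<in> Ck K 2" unfolding \<eta>'_def using sgD(4)[OF sg_Ck] \<eta>C aCk bCk by blast
    moreover have "piq K 2 \<eta>' = piq K 2 \<eta>"
      unfolding \<eta>'_def piq_h(3) using piq_Cpq[OF aC(1)] piq_Cpq[OF bC(1)] by simp
    moreover have "dif K \<eta>' = 0"
    proof (rule ext_pr)
      fix i j
      have dC: "dif K \<eta> \<in> Ck K 3" using dif_Ck[OF \<eta>C] by (simp add: numeral_3_eq_3 numeral_2_eq_2)
      have e: "P i j (dif K \<eta>') = P i j (dif K \<eta>) - P i j (dif K a) - P i j (dif K b)"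
        unfolding \<eta>'_def dif_h(3) pr_h(3) ..
      show "P i j (dif K \<eta>') = P i j 0"
      proof (cases "(i, j) = (3, 0)")
        case True
        then show ?thesis using e a(2) da db Cpq_iff Cpq_other[OF db] pr_h(1) by simp
      next
        case n30: False
        show ?thesis
        proof (cases "(i, j) = (2, 1)")
          case True
          then show ?thesis using e b(2) da db Cpq_iff Cpq_other[OF da] pr_h(1) by simp
        next
          case n21: False
          have "P i j (dif K \<eta>) = 0"
          proof (cases "2 \<le> j")
            case True
            have "P i j (piq K 2 (dif K \<eta>)) = P i j (dif K \<eta>)" using True by (simp add: pr_piq)
            then show ?thesis using \<eta>(2) pr_h(1) by simp
          next
            case False
            then have "i + j \<noteq> 3" using n30 n21 by auto
            then show ?thesis using Ck_zero[OF dC] by blast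
          qed
          moreover have "P i j (dif K a) = 0" using Cpq_other[OF da] n30 by blast
          moreover have "P i j (dif K b) = 0" using Cpq_other[OF db] n21 by blast
          ultimately show ?thesis using e pr_h(1) by simp
        qed
      qed
    qed
    ultimately have "\<eta>' \<in> Zc K 2" "z = piq K 2 \<eta>'" unfolding Zc_def using \<eta>(3) by simp_all
    then show "z \<in> piq K 2 ` Zc K 2" by blast
  qed
  then show ?thesis using pp by simp
qed

end

lemma (in bgc) sg_Bcal: "sg (Bcal K 1 2)"
  unfolding Bcal12 by (rule sg_image[OF sg_Bc2 piq_addh])

lemma (in bgc) sg_ker_rho: "sg (ker_rho K 2)"
  unfolding rho_eq by (rule sg_image[OF sg_Zc2 piq_addh])

lemma (in bgc) Bcal_sub: "Bcal K 1 2 \<subseteq> ker_rho K 2"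
  unfolding Bcal12 rho_eq using Bc_Zc by blast

theorem theorem5p5:
  fixes sc :: "'r::ring_1 \<Rightarrow> 'a::ab_group_add \<Rightarrow> 'a" and K :: "'a bicx"
  assumes "bigraded_complex sc K"
  shows
  \<comment> \<open>First diagram\<close>
  "(let X11 = Bc K 2 \<inter> Cpq K 2 0; X12 = Bc K 2; X13 = Bcal K 1 2;
        X21 = ZN K 0 2; X22 = Zc K 2; X23 = ker_rho K 2;
        p1 = piq K 1 in
     ses (agrp X11) (agrp X12) (agrp X13) id p1 \<and>
     ses (agrp X21) (agrp X22) (agrp X23) id p1 \<and>
     ses (agrp X21 Mod X11) (agrp X22 Mod X12) (agrp X23 Mod X13)
         (induced (agrp X22) X12 id) (induced (agrp X23) X13 p1) \<and>
     ses (agrp X11) (agrp X21) (agrp X21 Mod X11) id (\<lambda>x. X11 #>\<^bsub>agrp X21\<^esub> x) \<and>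
     ses (agrp X12) (agrp X22) (agrp X22 Mod X12) id (\<lambda>x. X12 #>\<^bsub>agrp X22\<^esub> x) \<and>
     ses (agrp X13) (agrp X23) (agrp X23 Mod X13) id (\<lambda>x. X13 #>\<^bsub>agrp X23\<^esub> x) \<and>
     (\<forall>x\<in>X12. id (p1 x) = p1 (id x)) \<and>
     (\<forall>x\<in>X21. induced (agrp X22) X12 id (X11 #>\<^bsub>agrp X21\<^esub> x) = X12 #>\<^bsub>agrp X22\<^esub> id x) \<and>
     (\<forall>x\<in>X22. induced (agrp X23) X13 p1 (X12 #>\<^bsub>agrp X22\<^esub> x) = X13 #>\<^bsub>agrp X23\<^esub> p1 x))
   \<and>
  \<comment> \<open>Second diagram\<close>
   (let Y11 = Bcal K 1 2 \<inter> Cpq K 1 1; Y12 = Bcal K 1 2; Y13 = d01 K ` Cpq K 0 1;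
        Y21 = ker_varrho K 2; Y22 = ker_rho K 2; Y23 = Zcal K 2 2;
        p2 = piq K 2 in
     ses (agrp Y11) (agrp Y12) (agrp Y13) id p2 \<and>
     ses (agrp Y21) (agrp Y22) (agrp Y23) id p2 \<and>
     ses (agrp Y21 Mod Y11) (agrp Y22 Mod Y12) (agrp Y23 Mod Y13)
         (induced (agrp Y22) Y12 id) (induced (agrp Y23) Y13 p2) \<and>
     ses (agrp Y11) (agrp Y21) (agrp Y21 Mod Y11) id (\<lambda>x. Y11 #>\<^bsub>agrp Y21\<^esub> x) \<and>
     ses (agrp Y12) (agrp Y22) (agrp Y22 Mod Y12) id (\<lambda>x. Y12 #>\<^bsub>agrp Y22\<^esub> x) \<and>
     ses (agrp Y13) (agrp Y23) (agrp Y23 Mod Y13) id (\<lambda>x. Y13 #>\<^bsub>agrp Y23\<^esub> x) \<and>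
     (\<forall>x\<in>Y12. id (p2 x) = p2 (id x)) \<and>
     (\<forall>x\<in>Y21. induced (agrp Y22) Y12 id (Y11 #>\<^bsub>agrp Y21\<^esub> x) = Y12 #>\<^bsub>agrp Y22\<^esub> id x) \<and>
     (\<forall>x\<in>Y22. induced (agrp Y23) Y13 p2 (Y12 #>\<^bsub>agrp Y22\<^esub> x) = Y13 #>\<^bsub>agrp Y23\<^esub> p2 x))"
proof -
  interpret bgc sc K by unfold_locales (rule assms)
  note d1 = diagram[OF sg_Bc2 sg_Zc2 Bc_Zc piq_addh X11_eq ZN_eq Bcal12 rho_eq]
  note d2 = diagram[OF sg_Bcal sg_ker_rho Bcal_sub piq_addh Y11_eq Y21_eq Y13_eq Zcal_eq]
  show ?thesis unfolding Let_def by (rule conjI[OF d1 d2])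
qed

end
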